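(* Let $\mathbf A$ be a pseudo-Kleene lattice. Then $\mathbf A$ satisfies (SP1) if and only if $\mathbf A$ contains no subalgebra isomorphic to $\mathbf B_6$ and no subalgebra isomorphic to $\mathbf B_8$.
   Context: A pseudo-Kleene lattice is an algebra $(A,\land,\lor,{}',0,1)$ that is a bounded lattice with an antitone involution ${}'$ ($x\leq y\Rightarrow y'\leq x'$, $x''=x$) satisfying $x\land x'\leq y\lor y'$; subalgebras are with respect to $\land,\lor,{}',0,1$. (SP1) is the condition: for all $x,y$, if $x\leq y$ and $x'\land y=(x\land x')\lor(y\land y')$, then $y\land(x\lor x')=x\lor(y\land y')$. $\mathbf B_6$ is the pseudo-Kleene lattice (ortholattice) with elements $0,x,y,y',x',1$, covers $0\prec x\prec y\prec 1$, $0\prec y'\prec x'\prec 1$, involution $u\leftrightarrow u'$, $0\leftrightarrow 1$. $\mathbf B_8$ is the pseudo-Kleene lattice with elements $0,z',x,y,y',x',z,1$, covers $0\prec z'$, $z'\prec x\prec y\prec z$, $z'\prec y'\prec x'\prec z$, $z\prec 1$, involution $u\leftrightarrow u'$, $0\leftrightarrow 1$. *)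

theory Defs
  imports Main
begin

definition pseudo_kleene :: "('a::bounded_lattice \<Rightarrow> 'a) \<Rightarrow> bool" where
  "pseudo_kleene neg \<longleftrightarrow>
     (\<forall>x y. x \<le> y \<longrightarrow> neg y \<le> neg x) \<and>
     (\<forall>x. neg (neg x) = x) \<and>
     (\<forall>x y. inf x (neg x) \<le> sup y (neg y))"

definition SP1 :: "('a::bounded_lattice \<Rightarrow> 'a) \<Rightarrow> bool" where
  "SP1 neg \<longleftrightarrow>
     (\<forall>x y. x \<le> y \<and> inf (neg x) y = sup (inf x (neg x)) (inf y (neg y)) \<longrightarrow>
        inf y (sup x (neg x)) = sup x (inf y (neg y)))"

definition subalgebra :: "('a::bounded_lattice \<Rightarrow> 'a) \<Rightarrow> 'a set \<Rightarrow> bool" where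
  "subalgebra neg S \<longleftrightarrow>
     bot \<in> S \<and> top \<in> S \<and>
     (\<forall>a\<in>S. \<forall>b\<in>S. inf a b \<in> S \<and> sup a b \<in> S) \<and>
     (\<forall>a\<in>S. neg a \<in> S)"

(* The algebra B6: 0 < x < y < 1, 0 < y' < x' < 1 *)
datatype B6 = B6_0 | B6_x | B6_y | B6_y' | B6_x' | B6_1

fun B6_le :: "B6 \<Rightarrow> B6 \<Rightarrow> bool" where
  "B6_le a b \<longleftrightarrow> a = B6_0 \<or> b = B6_1 \<or> a = b \<or>
      (a = B6_x \<and> b = B6_y) \<or> (a = B6_y' \<and> b = B6_x')"

definition B6_meet :: "B6 \<Rightarrow> B6 \<Rightarrow> B6" where
  "B6_meet a b = (if B6_le a b then a else if B6_le b a then b else B6_0)"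

definition B6_join :: "B6 \<Rightarrow> B6 \<Rightarrow> B6" where
  "B6_join a b = (if B6_le a b then b else if B6_le b a then a else B6_1)"

fun B6_neg :: "B6 \<Rightarrow> B6" where
  "B6_neg B6_0 = B6_1" | "B6_neg B6_1 = B6_0"
| "B6_neg B6_x = B6_x'" | "B6_neg B6_x' = B6_x"
| "B6_neg B6_y = B6_y'" | "B6_neg B6_y' = B6_y"

(* The algebra B8: 0 < z' < x < y < z < 1, z' < y' < x' < z *)
datatype B8 = B8_0 | B8_z' | B8_x | B8_y | B8_y' | B8_x' | B8_z | B8_1

fun B8_le :: "B8 \<Rightarrow> B8 \<Rightarrow> bool" where
  "B8_le a b \<longleftrightarrow> a = B8_0 \<or> b = B8_1 \<or> a = b \<or>
      (a = B8_z' \<and> b \<noteq> B8_0) \<or> (b = B8_z \<and> a \<noteq> B8_1) \<or>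
      (a = B8_x \<and> b = B8_y) \<or> (a = B8_y' \<and> b = B8_x')"

definition B8_meet :: "B8 \<Rightarrow> B8 \<Rightarrow> B8" where
  "B8_meet a b = (if B8_le a b then a else if B8_le b a then b else B8_z')"

definition B8_join :: "B8 \<Rightarrow> B8 \<Rightarrow> B8" where
  "B8_join a b = (if B8_le a b then b else if B8_le b a then a else B8_z)"

fun B8_neg :: "B8 \<Rightarrow> B8" where
  "B8_neg B8_0 = B8_1" | "B8_neg B8_1 = B8_0"
| "B8_neg B8_z' = B8_z" | "B8_neg B8_z = B8_z'"
| "B8_neg B8_x = B8_x'" | "B8_neg B8_x' = B8_x"
| "B8_neg B8_y = B8_y'" | "B8_neg B8_y' = B8_y"

definition has_sub_B6 :: "('a::bounded_lattice \<Rightarrow> 'a) \<Rightarrow> bool" where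
  "has_sub_B6 neg \<longleftrightarrow> (\<exists>S (h :: B6 \<Rightarrow> 'a). subalgebra neg S \<and> bij_betw h UNIV S \<and>
     (\<forall>a b. h (B6_meet a b) = inf (h a) (h b)) \<and>
     (\<forall>a b. h (B6_join a b) = sup (h a) (h b)) \<and>
     (\<forall>a. h (B6_neg a) = neg (h a)) \<and>
     h B6_0 = bot \<and> h B6_1 = top)"

definition has_sub_B8 :: "('a::bounded_lattice \<Rightarrow> 'a) \<Rightarrow> bool" where
  "has_sub_B8 neg \<longleftrightarrow> (\<exists>S (h :: B8 \<Rightarrow> 'a). subalgebra neg S \<and> bij_betw h UNIV S \<and>
     (\<forall>a b. h (B8_meet a b) = inf (h a) (h b)) \<and>
     (\<forall>a b. h (B8_join a b) = sup (h a) (h b)) \<and>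
     (\<forall>a. h (B8_neg a) = neg (h a)) \<and>
     h B8_0 = bot \<and> h B8_1 = top)"

end

theory Submission
  imports Defs
begin

lemma sub_B8I:
  fixes h :: "B8 \<Rightarrow> 'a::bounded_lattice"
  assumes "inj h" "\<And>a b. h (B8_meet a b) = inf (h a) (h b)"
    "\<And>a b. h (B8_join a b) = sup (h a) (h b)"
    "\<And>a. h (B8_neg a) = neg (h a)" "h B8_0 = bot" "h B8_1 = top"
  shows "has_sub_B8 neg"
  unfolding has_sub_B8_def
proof (intro exI[of _ "range h"] exI[of _ h] conjI allI)
  show "subalgebra neg (range h)" unfolding subalgebra_def
  proof (intro conjI ballI)
    show "bot \<in> range h" by (metis assms(5) rangeI)
    show "top \<in> range h" by (metis assms(6) rangeI)
  next
    fix a b assume "a \<in> range h" "b \<in> range h"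
    then obtain u v where "a = h u" "b = h v" by blast
    then show "inf a b \<in> range h" "sup a b \<in> range h"
      by (metis assms(2) rangeI, metis assms(3) rangeI)
  next
    fix a assume "a \<in> range h"
    then obtain u where "a = h u" by blast
    then show "neg a \<in> range h" by (metis assms(4) rangeI)
  qed
  show "bij_betw h UNIV (range h)" using assms(1) by (simp add: bij_betw_def)
qed (use assms in auto)

lemma sub_B6I:
  fixes h :: "B6 \<Rightarrow> 'a::bounded_lattice"
  assumes "inj h" "\<And>a b. h (B6_meet a b) = inf (h a) (h b)"
    "\<And>a b. h (B6_join a b) = sup (h a) (h b)"
    "\<And>a. h (B6_neg a) = neg (h a)" "h B6_0 = bot" "h B6_1 = top"
  shows "has_sub_B6 neg"
  unfolding has_sub_B6_def
proof (intro exI[of _ "range h"] exI[of _ h] conjI allI)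
  show "subalgebra neg (range h)" unfolding subalgebra_def
  proof (intro conjI ballI)
    show "bot \<in> range h" by (metis assms(5) rangeI)
    show "top \<in> range h" by (metis assms(6) rangeI)
  next
    fix a b assume "a \<in> range h" "b \<in> range h"
    then obtain u v where "a = h u" "b = h v" by blast
    then show "inf a b \<in> range h" "sup a b \<in> range h"
      by (metis assms(2) rangeI, metis assms(3) rangeI)
  next
    fix a assume "a \<in> range h"
    then obtain u where "a = h u" by blast
    then show "neg a \<in> range h" by (metis assms(4) rangeI)
  qed
  show "bij_betw h UNIV (range h)" using assms(1) by (simp add: bij_betw_def)
qed (use assms in auto)

lemma B6_fails:
  assumes "SP1 neg" shows "\<not> has_sub_B6 neg"
proof
  assume "has_sub_B6 neg"
  then obtain S h where bij: "bij_betw h UNIV S" and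
    hm: "\<And>a b. h (B6_meet a b) = inf (h a) (h b)" and
    hj: "\<And>a b. h (B6_join a b) = sup (h a) (h b)" and
    hn: "\<And>a. h (B6_neg a) = neg (h a)"
    unfolding has_sub_B6_def by blast
  have inj: "inj h" using bij bij_betw_def by blast
  have le: "h B6_x \<le> h B6_y"
    by (metis hm le_iff_inf B6_meet_def B6_le.simps)
  have eq: "inf (neg (h B6_x)) (h B6_y) = sup (inf (h B6_x) (neg (h B6_x))) (inf (h B6_y) (neg (h B6_y)))"
    by (simp add: hn[symmetric] hm[symmetric] hj[symmetric] B6_meet_def B6_join_def)
  have "inf (h B6_y) (sup (h B6_x) (neg (h B6_x))) = sup (h B6_x) (inf (h B6_y) (neg (h B6_y)))"
    using assms le eq unfolding SP1_def by blast
  then have "h B6_y = h B6_x"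
    by (simp add: hn[symmetric] hm[symmetric] hj[symmetric] B6_meet_def B6_join_def)
  then show False using inj by (meson B6.distinct injD)
qed

lemma B8_fails:
  assumes "SP1 neg" shows "\<not> has_sub_B8 neg"
proof
  assume "has_sub_B8 neg"
  then obtain S h where bij: "bij_betw h UNIV S" and
    hm: "\<And>a b. h (B8_meet a b) = inf (h a) (h b)" and
    hj: "\<And>a b. h (B8_join a b) = sup (h a) (h b)" and
    hn: "\<And>a. h (B8_neg a) = neg (h a)"
    unfolding has_sub_B8_def by blast
  have inj: "inj h" using bij bij_betw_def by blast
  have le: "h B8_x \<le> h B8_y"
    by (metis hm le_iff_inf B8_meet_def B8_le.simps)
  have eq: "inf (neg (h B8_x)) (h B8_y) = sup (inf (h B8_x) (neg (h B8_x))) (inf (h B8_y) (neg (h B8_y)))"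
    by (simp add: hn[symmetric] hm[symmetric] hj[symmetric] B8_meet_def B8_join_def)
  have "inf (h B8_y) (sup (h B8_x) (neg (h B8_x))) = sup (h B8_x) (inf (h B8_y) (neg (h B8_y)))"
    using assms le eq unfolding SP1_def by blast
  then have "h B8_y = h B8_x"
    by (simp add: hn[symmetric] hm[symmetric] hj[symmetric] B8_meet_def B8_join_def)
  then show False using inj by (meson B8.distinct injD)
qed

lemma demorgan:
  fixes n :: "'a::bounded_lattice \<Rightarrow> 'a"
  assumes anti: "\<And>x y. x \<le> y \<Longrightarrow> n y \<le> n x" and inv: "\<And>x. n (n x) = x"
  shows "n (sup a b) = inf (n a) (n b)" "n (inf a b) = sup (n a) (n b)"
proof -
  show "n (sup a b) = inf (n a) (n b)"
  proof (rule antisym)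
    show "n (sup a b) \<le> inf (n a) (n b)" by (simp add: anti)
    have "sup a b \<le> n (inf (n a) (n b))"
      by (metis anti inv inf_le1 inf_le2 sup_least)
    then show "inf (n a) (n b) \<le> n (sup a b)" by (metis anti inv)
  qed
  show "n (inf a b) = sup (n a) (n b)"
  proof (rule antisym)
    show "sup (n a) (n b) \<le> n (inf a b)" by (simp add: anti)
    have "n (sup (n a) (n b)) \<le> inf a b"
      by (metis anti inv sup_ge1 sup_ge2 le_inf_iff)
    then show "n (inf a b) \<le> sup (n a) (n b)" by (metis anti inv)
  qed
qed

lemma chain6:
  fixes a b c d e f :: "'a::order"
  assumes "a<b" "b<c" "c<f" "a<d" "d<e" "e<f" "b\<noteq>d" "b\<noteq>e" "c\<noteq>d" "c\<noteq>e"
  shows "a\<noteq>b" "a\<noteq>c" "a\<noteq>d" "a\<noteq>e" "a\<noteq>f" "b\<noteq>c" "b\<noteq>d" "b\<noteq>e" "b\<noteq>f"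
    "c\<noteq>d" "c\<noteq>e" "c\<noteq>f" "d\<noteq>e" "d\<noteq>f" "e\<noteq>f"
  by (insert assms, order)+
lemma chain8:
  fixes a w b c d e v f :: "'a::order"
  assumes "a<w" "w<b" "b<c" "c<v" "v<f" "w<d" "d<e" "e<v" "b\<noteq>d" "b\<noteq>e" "c\<noteq>d" "c\<noteq>e"
  shows "a\<noteq>w" "a\<noteq>b" "a\<noteq>c" "a\<noteq>d" "a\<noteq>e" "a\<noteq>v" "a\<noteq>f"
    "w\<noteq>b" "w\<noteq>c" "w\<noteq>d" "w\<noteq>e" "w\<noteq>v" "w\<noteq>f"
    "b\<noteq>c" "b\<noteq>d" "b\<noteq>e" "b\<noteq>v" "b\<noteq>f" "c\<noteq>d" "c\<noteq>e" "c\<noteq>v" "c\<noteq>f"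
    "d\<noteq>e" "d\<noteq>v" "d\<noteq>f" "e\<noteq>v" "e\<noteq>f" "v\<noteq>f"
  by (insert assms, order)+

lemma cm:
  fixes u :: "'a::lattice"
  assumes "u \<le> Q" "v \<le> R" "inf Q R = W" "W \<le> u" "W \<le> v"
  shows "inf u v = W"
proof (rule antisym)
  have "inf u v \<le> inf Q R" using assms(1,2) by (rule inf_mono)
  then show "inf u v \<le> W" using assms(3) by simp
  show "W \<le> inf u v" using assms(4,5) by simp
qed

lemma cj:
  fixes u :: "'a::lattice"
  assumes "Q \<le> u" "R \<le> v" "sup Q R = W" "u \<le> W" "v \<le> W"
  shows "sup u v = W"
proof (rule antisym)
  have "sup Q R \<le> sup u v" using assms(1,2) by (rule sup_mono)
  then show "W \<le> sup u v" using assms(3) by simp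
  show "sup u v \<le> W" using assms(4,5) by simp
qed

lemma build:
  fixes n :: "'a::bounded_lattice \<Rightarrow> 'a"
  assumes anti: "\<And>x y. x \<le> y \<Longrightarrow> n y \<le> n x" and inv: "\<And>x. n (n x) = x"
    and WP: "W \<le> P" and PQ: "P \<le> Q" and WnQ: "W \<le> n Q"
    and m: "inf Q (n P) = W" and j: "sup P (n Q) = n W" and ne: "P \<noteq> Q"
  shows "has_sub_B6 n \<or> has_sub_B8 n"
proof -
  have ninj: "n a = n b \<Longrightarrow> a = b" for a b by (metis inv)
  have QnW: "Q \<le> n W" by (metis anti inv WnQ)
  have nPnW: "n P \<le> n W" by (rule anti[OF WP])
  have nQnP: "n Q \<le> n P" by (rule anti[OF PQ])
  have WnP: "W \<le> n P" using WnQ nQnP by order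
  have PnW: "P \<le> n W" using PQ QnW by order
  have WQ: "W \<le> Q" using WP PQ by order
  have nQnW: "n Q \<le> n W" using nQnP nPnW by order
  have WnW: "W \<le> n W" using WP PnW by order
  have m1: "inf P (n Q) = W" "inf (n Q) P = W"
    "inf P (n P) = W" "inf (n P) P = W" "inf Q (n Q) = W" "inf (n Q) Q = W"
    "inf Q (n P) = W" "inf (n P) Q = W"
    by (rule cm[OF _ _ m], (fact|rule order_refl)+ | subst inf_commute, rule cm[OF _ _ m], (fact|rule order_refl)+)+
  have j1: "sup P (n Q) = n W" "sup (n Q) P = n W"
    "sup P (n P) = n W" "sup (n P) P = n W" "sup Q (n Q) = n W" "sup (n Q) Q = n W"
    "sup Q (n P) = n W" "sup (n P) Q = n W"
    by (rule cj[OF _ _ j], (fact|rule order_refl)+ | subst sup_commute, rule cj[OF _ _ j], (fact|rule order_refl)+)+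
  have ntop: "n top = bot"
  proof -
    have "n top \<le> n (n bot)" by (rule anti) simp
    then show ?thesis by (simp add: inv bot_unique)
  qed
  have nbot: "n bot = top" using ntop inv by metis
  have s1: "W \<noteq> P"
  proof
    assume "W = P"
    then have "inf Q (n P) = Q" using QnW inf_absorb1 by metis
    then show False using m ne \<open>W = P\<close> by simp
  qed
  have s2: "Q \<noteq> n W"
  proof
    assume "Q = n W"
    then have "n Q = W" by (simp add: inv)
    then have "sup P (n Q) = P" using WP sup_absorb1 by metis
    then show False using j ne \<open>Q = n W\<close> by simp
  qed
  have c1: "P \<noteq> n Q" "P \<noteq> n P" "Q \<noteq> n Q" "Q \<noteq> n P"
  proof -
    have QW: "Q \<noteq> W" using s1 WP PQ by order
    show "P \<noteq> n Q" using m1(1) s1 by (metis inf.idem)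
    show "P \<noteq> n P" using m1(3) s1 by (metis inf.idem)
    show "Q \<noteq> n Q" using m1(5) QW by (metis inf.idem)
    show "Q \<noteq> n P" using m1(7) QW by (metis inf.idem)
  qed
  have l1: "W < P" using WP s1 by order
  have l2: "P < Q" using PQ ne by order
  have l3: "Q < n W" using QnW s2 by order
  have l4: "W < n Q" proof -
    have "W \<noteq> n Q" using s2 inv by metis
    then show ?thesis using WnQ by order
  qed
  have l5: "n Q < n P" proof -
    have "n Q \<noteq> n P" using ne ninj by metis
    then show ?thesis using nQnP by order
  qed
  have l6: "n P < n W" proof -
    have "n P \<noteq> n W" using s1 ninj by metis
    then show ?thesis using nPnW by order
  qed
  show ?thesis
  proof (cases "W = bot")
    case True
    then have nW: "n W = top" using nbot by simp
    define h where "h = (\<lambda>a. case a of B6_0 \<Rightarrow> bot | B6_x \<Rightarrow> P | B6_y \<Rightarrow> Q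
       | B6_y' \<Rightarrow> n Q | B6_x' \<Rightarrow> n P | B6_1 \<Rightarrow> top)"
    have d: "bot \<noteq> P" "bot \<noteq> Q" "bot \<noteq> n Q" "bot \<noteq> n P" "(bot::'a) \<noteq> top"
      "P \<noteq> Q" "P \<noteq> n Q" "P \<noteq> n P" "P \<noteq> top" "Q \<noteq> n Q" "Q \<noteq> n P" "Q \<noteq> top"
      "n Q \<noteq> n P" "n Q \<noteq> top" "n P \<noteq> top"
      proof -
      have a: "bot < P" "P < Q" "Q < top" "bot < n Q" "n Q < n P" "n P < top"
        using l1 l2 l3 l4 l5 l6 True nW by simp_all
      show "bot \<noteq> P" "bot \<noteq> Q" "bot \<noteq> n Q" "bot \<noteq> n P" "(bot::'a) \<noteq> top"
      "P \<noteq> Q" "P \<noteq> n Q" "P \<noteq> n P" "P \<noteq> top" "Q \<noteq> n Q" "Q \<noteq> n P" "Q \<noteq> top"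
      "n Q \<noteq> n P" "n Q \<noteq> top" "n P \<noteq> top" by (fact chain6[OF a c1])+
    qed
    have "has_sub_B6 n"
    proof (rule sub_B6I[of h])
      show "inj h" unfolding inj_def
        apply (intro allI impI) subgoal for a b
        by (cases a; cases b; simp add: h_def d d[symmetric])
        done
      show "h (B6_meet a b) = inf (h a) (h b)" for a b
        using m1 True
        by (cases a; cases b; simp add: h_def B6_meet_def WP PQ WQ WnQ WnP nQnP inf_absorb1 inf_absorb2)
      show "h (B6_join a b) = sup (h a) (h b)" for a b
        using j1 nW
        by (cases a; cases b; simp add: h_def B6_join_def PnW QnW nQnW nPnW PQ nQnP sup_absorb1 sup_absorb2)
      show "h (B6_neg a) = n (h a)" for a
        by (cases a; simp add: h_def inv nbot ntop)
    qed (simp_all add: h_def)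
    then show ?thesis by blast
  next
    case False
    have nWt: "n W \<noteq> top" using False ntop inv by metis
    define h where "h = (\<lambda>a. case a of B8_0 \<Rightarrow> bot | B8_z' \<Rightarrow> W | B8_x \<Rightarrow> P | B8_y \<Rightarrow> Q
       | B8_y' \<Rightarrow> n Q | B8_x' \<Rightarrow> n P | B8_z \<Rightarrow> n W | B8_1 \<Rightarrow> top)"
    have l0: "bot < W" using False by (simp add: bot.not_eq_extremum)
    have l7: "n W < top" using nWt by (simp add: top.not_eq_extremum)
    have d: "bot \<noteq> W" "bot \<noteq> P" "bot \<noteq> Q" "bot \<noteq> n Q" "bot \<noteq> n P" "bot \<noteq> n W" "(bot::'a) \<noteq> top"
      "W \<noteq> P" "W \<noteq> Q" "W \<noteq> n Q" "W \<noteq> n P" "W \<noteq> n W" "W \<noteq> top"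
      "P \<noteq> Q" "P \<noteq> n Q" "P \<noteq> n P" "P \<noteq> n W" "P \<noteq> top" "Q \<noteq> n Q" "Q \<noteq> n P"
      "Q \<noteq> n W" "Q \<noteq> top"
      "n Q \<noteq> n P" "n Q \<noteq> n W" "n Q \<noteq> top" "n P \<noteq> n W" "n P \<noteq> top" "n W \<noteq> top"
      by (fact chain8[OF l0 l1 l2 l3 l7 l4 l5 l6 c1])+
    have "has_sub_B8 n"
    proof (rule sub_B8I[of h])
      show "inj h" unfolding inj_def
        apply (intro allI impI) subgoal for a b
        by (cases a; cases b; simp add: h_def d d[symmetric])
        done
      show "h (B8_meet a b) = inf (h a) (h b)" for a b
        using m1
        by (cases a; cases b; simp add: h_def B8_meet_def WP PQ WQ WnQ WnP nQnP QnW PnW nQnW nPnW WnW inf_absorb1 inf_absorb2)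
      show "h (B8_join a b) = sup (h a) (h b)" for a b
        using j1
        by (cases a; cases b; simp add: h_def B8_join_def WP PQ WQ WnQ WnP nQnP QnW PnW nQnW nPnW WnW sup_absorb1 sup_absorb2)
      show "h (B8_neg a) = n (h a)" for a
        by (cases a; simp add: h_def inv nbot ntop)
    qed (simp_all add: h_def)
    then show ?thesis by blast
  qed
qed

theorem theorem3p2:
  fixes neg :: "'a::bounded_lattice \<Rightarrow> 'a"
  assumes "pseudo_kleene neg"
  shows "SP1 neg \<longleftrightarrow> \<not> has_sub_B6 neg \<and> \<not> has_sub_B8 neg"
proof
  assume "SP1 neg" then show "\<not> has_sub_B6 neg \<and> \<not> has_sub_B8 neg"
    using B6_fails B8_fails by blast
next
  assume nb: "\<not> has_sub_B6 neg \<and> \<not> has_sub_B8 neg"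
  have anti: "\<And>x y. x \<le> y \<Longrightarrow> neg y \<le> neg x" and inv: "\<And>x. neg (neg x) = x"
    and kl: "\<And>x y. inf x (neg x) \<le> sup y (neg y)"
    using assms unfolding pseudo_kleene_def by blast+
  note dm = demorgan[of neg, OF anti inv]
  show "SP1 neg" unfolding SP1_def
  proof (intro allI impI, rule ccontr)
    fix x y
    assume h: "x \<le> y \<and> inf (neg x) y = sup (inf x (neg x)) (inf y (neg y))"
      and ne: "inf y (sup x (neg x)) \<noteq> sup x (inf y (neg y))"
    define c where "c = inf x (neg x)"
    define d where "d = inf y (neg y)"
    define W where "W = inf (neg x) y"
    define P where "P = sup x d"
    define Q where "Q = inf y (sup x (neg x))"
    have xy: "x \<le> y" using h by blast
    have Wcd: "W = sup c d" using h unfolding W_def c_def d_def by blast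
    have dx: "d \<le> sup x (neg x)" unfolding d_def by (rule kl)
    have cx: "c \<le> x" unfolding c_def by simp
    have dny: "d \<le> neg y" unfolding d_def by simp
    have nP: "neg P = inf (neg x) (sup (neg y) y)"
      unfolding P_def d_def by (simp add: dm inv sup_commute)
    have nQ: "neg Q = sup (neg y) c"
      unfolding Q_def c_def by (simp add: dm inv inf_commute)
    have nW: "neg W = sup x (neg y)" unfolding W_def by (simp add: dm inv)
    have WP: "W \<le> P" unfolding Wcd P_def using cx by (simp add: le_supI1)
    have PQ: "P \<le> Q" unfolding P_def Q_def using xy dx
      by (simp add: d_def)
    have WnQ: "W \<le> neg Q" unfolding Wcd nQ using dny by (simp add: le_supI1)
    have m: "inf Q (neg P) = W"
    proof (rule antisym)
      show "inf Q (neg P) \<le> W" unfolding nP Q_def W_def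
        by (meson inf_le1 inf_le2 le_inf_iff order_trans)
      show "W \<le> inf Q (neg P)" unfolding nP Q_def W_def
        by (simp add: le_infI1 le_infI2 le_supI1 le_supI2)
    qed
    have j: "sup P (neg Q) = neg W"
    proof (rule antisym)
      show "sup P (neg Q) \<le> neg W" unfolding nW nQ P_def using cx dny
        by (simp add: le_supI1 le_supI2)
      show "neg W \<le> sup P (neg Q)" unfolding nW nQ P_def
        by (simp add: le_supI1 le_supI2)
    qed
    have "P \<noteq> Q" using ne unfolding P_def Q_def d_def by simp
    from build[of neg, OF anti inv WP PQ WnQ m j this] nb show False by blast
  qed
qed

end
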